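(* Let $i\ge1$ and let $(a_j)_{j\ge1}$ satisfy $\delta_0\le a_j\le Aj$ for all $j\ge1$, for some $A>0$ and $\delta_0>0$. Let $y_0\in\mathcal X^+_{1,i}$ with $y_{i,0}>0$, and let $y$ be the solution of $dy/dt=F(y)$, $y(0)=y_0$. Let $$t_*:=\sup\{t>0:\ y_i(s)>0 \text{ for all } s\in[0,t)\}.$$ Then $t_*\in(0,\infty)$.
   Context: $\|x\|_{1,1}=\sum_j j|x_j|$, $\mathcal X_{1,1}=\{x:\|x\|_{1,1}<\infty\}$, $\mathcal X_{1,i}=\{x\in\mathcal X_{1,1}:x_j=0 \text{ for } j<i\}$, and $\mathcal X^+_{1,i}$ is the subset with nonnegative entries. $F$ is defined by - $F_j(y)=0$ for $j<i$; - $F_i(y)=-a_iy_i-\sum_{j\ge i}a_jy_j$; - $F_j(y)=a_{j-i}y_{j-i}-a_jy_j$ for $j\ge i+1$. The solution $y\in C([0,\infty);\mathcal X_{1,i})$, with $C^1$ components, exists and is unique. *)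

theory Defs
  imports "HOL-Analysis.Analysis"
begin

text \<open>Sequences x = (x_j)_{j>=1} are modelled as nat => real; index 0 is forced to be 0
  by membership in X_{1,i} with i >= 1.\<close>

definition norm11 :: "(nat \<Rightarrow> real) \<Rightarrow> real" where
  "norm11 x = (\<Sum>j. real j * \<bar>x j\<bar>)"

definition X11 :: "(nat \<Rightarrow> real) set" where
  "X11 = {x. summable (\<lambda>j. real j * \<bar>x j\<bar>)}"

definition X1i :: "nat \<Rightarrow> (nat \<Rightarrow> real) set" where
  "X1i i = {x \<in> X11. \<forall>j<i. x j = 0}"

definition X1i_pos :: "nat \<Rightarrow> (nat \<Rightarrow> real) set" where
  "X1i_pos i = {x \<in> X1i i. \<forall>j. 0 \<le> x j}"

definition Fcoag :: "(nat \<Rightarrow> real) \<Rightarrow> nat \<Rightarrow> (nat \<Rightarrow> real) \<Rightarrow> nat \<Rightarrow> real" where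
  "Fcoag a i y j =
    (if j < i then 0
     else if j = i then - a i * y i - (\<Sum>k. a (k + i) * y (k + i))
     else a (j - i) * y (j - i) - a j * y j)"

definition is_solution ::
  "(nat \<Rightarrow> real) \<Rightarrow> nat \<Rightarrow> (nat \<Rightarrow> real) \<Rightarrow> (real \<Rightarrow> nat \<Rightarrow> real) \<Rightarrow> bool" where
  "is_solution a i y0 y \<longleftrightarrow>
     (\<forall>t\<ge>0. y t \<in> X1i i) \<and>
     (\<forall>t\<ge>0. ((\<lambda>s. norm11 (\<lambda>j. y s j - y t j)) \<longlongrightarrow> 0) (at t within {0..})) \<and>
     y 0 = y0 \<and>
     (\<forall>j. \<forall>t\<ge>0. ((\<lambda>s. y s j) has_real_derivative Fcoag a i (y t) j) (at t within {0..})) \<and>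
     (\<forall>j. continuous_on {0..} (\<lambda>t. Fcoag a i (y t) j))"

end

theory Submission
  imports Defs
begin

lemma mono_deriv:
  fixes f f' :: "real \<Rightarrow> real"
  assumes D: "\<And>t. t \<ge> 0 \<Longrightarrow> (f has_real_derivative f' t) (at t within {0..})"
    and N: "\<And>t. a \<le> t \<Longrightarrow> t \<le> b \<Longrightarrow> f' t \<ge> 0" and "0 \<le> a" "a \<le> b"
  shows "f a \<le> f b"
proof (rule DERIV_nonneg_imp_increasing_open[OF \<open>a \<le> b\<close>])
  fix x assume x: "a < x" "x < b"
  have "x \<in> interior {0::real..}" using x \<open>0 \<le> a\<close> by simp
  then have "at x within {0..} = at x" by (rule at_within_interior)
  then have "DERIV f x :> f' x" using D[of x] x \<open>0 \<le> a\<close> by simp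
  then show "\<exists>y. DERIV f x :> y \<and> y \<ge> 0" using N[of x] x by auto
next
  show "continuous_on {a..b} f"
    unfolding continuous_on_eq_continuous_within
  proof
    fix x assume "x \<in> {a..b}"
    then have "continuous (at x within {0..}) f" using D[of x] \<open>0 \<le> a\<close> by (auto intro: DERIV_continuous)
    then show "continuous (at x within {a..b}) f"
      by (rule continuous_within_subset) (use \<open>0 \<le> a\<close> in auto)
  qed
qed

lemma Fcoag_i:
  fixes a :: "nat \<Rightarrow> real"
  assumes "i \<ge> 1" "A > 0" "\<forall>j\<ge>1. \<delta>0 \<le> a j \<and> a j \<le> A * real j" "x \<in> X1i i" "\<delta>0 > 0"
  shows "summable (\<lambda>j. a j * x j)"
    and "Fcoag a i x i = - a i * x i - (\<Sum>j. a j * x j)"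
proof -
  have x0: "\<forall>j<i. x j = 0" and sx: "summable (\<lambda>j. real j * \<bar>x j\<bar>)"
    using assms(4) by (auto simp: X1i_def X11_def)
  have b: "norm (a j * x j) \<le> A * (real j * \<bar>x j\<bar>)" for j
  proof (cases "j = 0")
    case True then show ?thesis using x0 assms(1) by simp
  next
    case False
    then have "\<bar>a j\<bar> \<le> A * real j" using assms(3,5) by (smt (verit) One_nat_def Suc_leI neq0_conv)
    then show ?thesis by (simp add: abs_mult mult_right_mono mult.assoc[symmetric])
  qed
  show s: "summable (\<lambda>j. a j * x j)"
    by (rule summable_comparison_test[OF _ summable_mult[OF sx]]) (use b in auto)
  have "(\<Sum>j. a j * x j) = (\<Sum>n. a (n + i) * x (n + i)) + (\<Sum>j<i. a j * x j)"
    by (rule suminf_split_initial_segment[OF s])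
  also have "(\<Sum>j<i. a j * x j) = 0" using x0 by simp
  finally show "Fcoag a i x i = - a i * x i - (\<Sum>j. a j * x j)"
    by (simp add: Fcoag_def)
qed

lemma nonneg:
  fixes a :: "nat \<Rightarrow> real" and y :: "real \<Rightarrow> nat \<Rightarrow> real"
  assumes "i \<ge> 1" "\<delta>0 > 0" "\<forall>j\<ge>1. \<delta>0 \<le> a j \<and> a j \<le> A * real j"
    "y0 \<in> X1i_pos i" "is_solution a i y0 y" "\<forall>s\<ge>0. y s i > 0"
  shows "\<forall>t\<ge>0. y t j \<ge> 0"
proof (induction j rule: less_induct)
  case (less j)
  have X: "\<And>t. t \<ge> 0 \<Longrightarrow> y t \<in> X1i i" and y00: "y 0 = y0"
    and D: "\<And>j t. t \<ge> 0 \<Longrightarrow> ((\<lambda>s. y s j) has_real_derivative Fcoag a i (y t) j) (at t within {0..})"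
    using assms(5) unfolding is_solution_def by auto
  show ?case
  proof (cases "j < i")
    case True then show ?thesis using X by (auto simp: X1i_def)
  next
    case False
    show ?thesis
    proof (cases "j = i")
      case True then show ?thesis using assms(6) by (auto intro: less_imp_le)
    next
      case False
      with \<open>\<not> j < i\<close> have ji: "j > i" by simp
      have aji: "a (j - i) > 0" using assms(2,3) ji by (metis One_nat_def Suc_leI less_le_trans zero_less_diff)
      have IH: "\<forall>t\<ge>0. y t (j - i) \<ge> 0" using less.IH[of "j - i"] ji assms(1) by simp
      have F: "Fcoag a i (y t) j = a (j - i) * y t (j - i) - a j * y t j" for t
        using ji by (simp add: Fcoag_def)
      show ?thesis
      proof (intro allI impI)
        fix t :: real assume t: "t \<ge> 0"
        have "(\<lambda>s. exp (a j * s) * y s j) 0 \<le> (\<lambda>s. exp (a j * s) * y s j) t"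
        proof (rule mono_deriv[where f = "\<lambda>s. exp (a j * s) * y s j" and f' = "\<lambda>s. exp (a j * s) * (a (j - i) * y s (j - i))"])
          fix s :: real assume s: "s \<ge> 0"
          have E: "((\<lambda>s. exp (a j * s)) has_real_derivative exp (a j * s) * a j) (at s within {0..})"
            by (auto intro!: derivative_eq_intros)
          note DERIV_mult[OF E D[OF s, of j]]
          then show "((\<lambda>s. exp (a j * s) * y s j) has_real_derivative
              exp (a j * s) * (a (j - i) * y s (j - i))) (at s within {0..})"
            by (simp add: F algebra_simps)
        next
          fix s :: real assume "0 \<le> s"
          then show "0 \<le> exp (a j * s) * (a (j - i) * y s (j - i))" using IH aji by simp
        qed (use t in auto)
        then have "exp (a j * t) * y t j \<ge> y0 j" using y00 by simp
        moreover have "y0 j \<ge> 0" using assms(4) by (simp add: X1i_pos_def)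
        ultimately have "exp (a j * t) * y t j \<ge> 0" by linarith
        then show "y t j \<ge> 0" by (simp add: zero_le_mult_iff)
      qed
    qed
  qed
qed

lemma never_positive:
  fixes i :: nat and a :: "nat \<Rightarrow> real" and A \<delta>0 :: real
    and y0 :: "nat \<Rightarrow> real" and y :: "real \<Rightarrow> nat \<Rightarrow> real"
  assumes "i \<ge> 1" "A > 0" "\<delta>0 > 0" "\<forall>j\<ge>1. \<delta>0 \<le> a j \<and> a j \<le> A * real j"
    "y0 \<in> X1i_pos i" "is_solution a i y0 y" and pos: "\<forall>s\<ge>0. y s i > 0"
  shows False
proof -
  have X: "\<And>t. t \<ge> 0 \<Longrightarrow> y t \<in> X1i i" and y00: "y 0 = y0"
    and D: "\<And>j t. t \<ge> 0 \<Longrightarrow> ((\<lambda>s. y s j) has_real_derivative Fcoag a i (y t) j) (at t within {0..})"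
    using assms(6) unfolding is_solution_def by auto
  have nn: "\<And>t j. t \<ge> 0 \<Longrightarrow> y t j \<ge> 0"
    using nonneg[OF assms(1,3,4,5,6) pos] by blast
  define g where "g t j = a j * y t j" for t j
  define S where "S t = (\<Sum>j. g t j)" for t
  define P where "P n t = (\<Sum>j\<in>{Suc i..n}. y t j)" for n t
  define G where "G n t = (\<Sum>j\<in>{Suc i..n}. g t j)" for n t
  have ai: "a i > 0" using assms(1,3,4) by force
  have aj: "\<And>j. j \<ge> 1 \<Longrightarrow> a j \<ge> \<delta>0" using assms(4) by blast
  have gnn: "g t j \<ge> 0" if t: "t \<ge> 0" for t j
  proof (cases "j = 0")
    case True
    then have "y t j = 0" using X[OF t] assms(1) by (auto simp: X1i_def)
    then show ?thesis by (simp add: g_def)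
  next
    case False
    then have "a j \<ge> 0" using aj[of j] assms(3) by simp
    then show ?thesis using nn[OF t] by (simp add: g_def)
  qed
  have summ: "summable (g t)" if t: "t \<ge> 0" for t
    using Fcoag_i(1)[OF assms(1,2,4) X[OF t] assms(3)] by (simp add: g_def[abs_def])
  have FI: "Fcoag a i (y t) i = - a i * y t i - S t" if t: "t \<ge> 0" for t
    using Fcoag_i(2)[OF assms(1,2,4) X[OF t] assms(3)] by (simp add: g_def S_def)
  have Fj: "Fcoag a i (y t) j = g t (j - i) - g t j" if "j > i" for t j
    using that by (simp add: Fcoag_def g_def)
  have subS: "sum (g t) F \<le> S t" if "t \<ge> 0" "finite F" for t F
    unfolding S_def using sum_le_suminf[OF summ[OF that(1)] that(2)] gnn[OF that(1)] by blast
  have PS: "\<delta>0 * P n t \<le> S t" if t: "t \<ge> 0" for t n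
  proof -
    have "\<delta>0 * P n t = (\<Sum>j\<in>{Suc i..n}. \<delta>0 * y t j)" by (simp add: P_def sum_distrib_left)
    also have "\<dots> \<le> (\<Sum>j\<in>{Suc i..n}. g t j)"
    proof (rule sum_mono)
      fix j assume "j \<in> {Suc i..n}"
      then have "a j \<ge> \<delta>0" using aj assms(1) by simp
      then show "\<delta>0 * y t j \<le> g t j" unfolding g_def using nn[OF t, of j] by (simp add: mult_right_mono)
    qed
    also have "\<dots> \<le> S t" using subS[OF t] by simp
    finally show ?thesis .
  qed
  have DY: "((\<lambda>s. y s i) has_real_derivative (- a i * y t i - S t)) (at t within {0..})" if t: "t \<ge> 0" for t
    using D[OF t, of i] FI[OF t] by simp
  have DP: "((\<lambda>s. P n s) has_real_derivative (\<Sum>j\<in>{Suc i..n}. g t (j - i) - g t j)) (at t within {0..})"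
    if t: "t \<ge> 0" for t n
  proof -
    have "((\<lambda>s. P n s) has_real_derivative (\<Sum>j\<in>{Suc i..n}. Fcoag a i (y t) j)) (at t within {0..})"
      unfolding P_def by (rule DERIV_sum) (rule D[OF t])
    moreover have "(\<Sum>j\<in>{Suc i..n}. Fcoag a i (y t) j) = (\<Sum>j\<in>{Suc i..n}. g t (j - i) - g t j)"
      by (rule sum.cong) (auto intro: Fj)
    ultimately show ?thesis by simp
  qed
  have KP: "(\<Sum>j\<in>{Suc i..(m+2)*i}. g t (j - i) - g t j) \<ge> g t i + G ((m+1)*i) t - G ((m+2)*i) t"
    if t: "t \<ge> 0" for m t
  proof -
    have "(\<Sum>j\<in>{Suc i..(m+2)*i}. g t (j - i)) = (\<Sum>j\<in>{1 + i..(m+1)*i + i}. g t (j - i))"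
      by (simp add: algebra_simps)
    also have "\<dots> = (\<Sum>k\<in>{1..(m+1)*i}. g t (k + i - i))"
      by (rule sum.shift_bounds_cl_nat_ivl)
    also have "\<dots> = (\<Sum>k\<in>{1..(m+1)*i}. g t k)" by simp
    also have "\<dots> \<ge> (\<Sum>k\<in>{i..(m+1)*i}. g t k)"
      by (rule sum_mono2) (use assms(1) gnn[OF t] in auto)
    also have "(\<Sum>k\<in>{i..(m+1)*i}. g t k) = g t i + G ((m+1)*i) t"
      unfolding G_def by (rule sum.atLeast_Suc_atMost) simp
    finally have "(\<Sum>j\<in>{Suc i..(m+2)*i}. g t (j - i)) \<ge> g t i + G ((m+1)*i) t" .
    then show ?thesis by (simp add: sum_subtractf G_def)
  qed
  define R where "R M t = (\<Sum>m<M. P ((m+2)*i) t)" for M t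
  define Rd where "Rd M t = (\<Sum>m<M. \<Sum>j\<in>{Suc i..(m+2)*i}. g t (j - i) - g t j)" for M t
  have DR: "((\<lambda>s. R M s) has_real_derivative Rd M t) (at t within {0..})" if t: "t \<ge> 0" for M t
    unfolding R_def Rd_def by (rule DERIV_sum) (rule DP[OF t])
  have KR: "Rd M t \<ge> real M * (a i * y t i) - S t" if t: "t \<ge> 0" for M t
  proof -
    have "Rd M t \<ge> (\<Sum>m<M. g t i + (G ((m+1)*i) t - G ((Suc m+1)*i) t))"
      unfolding Rd_def by (rule sum_mono) (use KP[OF t] in \<open>auto simp: algebra_simps\<close>)
    moreover have "(\<Sum>m<M. g t i + (G ((m+1)*i) t - G ((Suc m+1)*i) t)) = real M * g t i + (G ((0+1)*i) t - G ((M+1)*i) t)"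
      by (simp only: sum.distrib sum_lessThan_telescope'[where f = "\<lambda>m. G ((m+1)*i) t"]) simp
    moreover have "G ((0+1)*i) t = 0" by (simp add: G_def)
    ultimately have "Rd M t \<ge> real M * g t i - G ((M+1)*i) t" by simp
    moreover have "G ((M+1)*i) t \<le> S t" unfolding G_def by (rule subS[OF t]) simp
    ultimately show ?thesis by (simp add: g_def)
  qed
  have Ycont: "continuous_on {0..1} (\<lambda>s. y s i)"
    unfolding continuous_on_eq_continuous_within
  proof
    fix x :: real assume x: "x \<in> {0..1}"
    then have "continuous (at x within {0..}) (\<lambda>s. y s i)" using D[of x i] by (auto intro: DERIV_continuous)
    then show "continuous (at x within {0..1}) (\<lambda>s. y s i)"
      by (rule continuous_within_subset) auto
  qed
  obtain x0 where x0: "x0 \<in> {0..1::real}" "\<forall>s\<in>{0..1}. y x0 i \<le> y s i"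
    using continuous_attains_inf[OF compact_Icc _ Ycont] by auto
  define \<eta> where "\<eta> = y x0 i"
  have eta: "\<eta> > 0" using pos x0(1) by (simp add: \<eta>_def)
  have etab: "\<And>s. 0 \<le> s \<Longrightarrow> s \<le> 1 \<Longrightarrow> \<eta> \<le> y s i" using x0(2) by (simp add: \<eta>_def)
  have aeta: "a i * \<eta> > 0" using ai eta by simp
  obtain n :: nat where n: "2 * y 0 i / (a i * \<eta>) < real n" using reals_Archimedean2 by blast
  define M where "M = Suc n"
  have M: "real M * (a i * \<eta>) \<ge> 2 * y 0 i" "real M > 0"
  proof -
    have "2 * y 0 i < real n * (a i * \<eta>)" using n aeta by (simp add: divide_less_eq)
    then show "real M * (a i * \<eta>) \<ge> 2 * y 0 i" using aeta unfolding M_def by (simp add: algebra_simps)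
  qed (simp add: M_def)
  have Rnn: "R M t \<ge> 0" if "t \<ge> 0" for t
    unfolding R_def P_def by (intro sum_nonneg) (use nn[OF that] in auto)
  have step1: "R M 0 - y 0 i - (real M + 1) * a i * \<eta> * 0 \<le> R M 1 - y 1 i - (real M + 1) * a i * \<eta> * 1"
  proof (rule mono_deriv[where f = "\<lambda>t. R M t - y t i - (real M + 1) * a i * \<eta> * t"
        and f' = "\<lambda>t. Rd M t - (- a i * y t i - S t) - (real M + 1) * a i * \<eta>"])
    fix t :: real assume t: "t \<ge> 0"
    show "((\<lambda>t. R M t - y t i - (real M + 1) * a i * \<eta> * t) has_real_derivative
        Rd M t - (- a i * y t i - S t) - (real M + 1) * a i * \<eta>) (at t within {0..})"
      using DR[OF t] DY[OF t] by (auto intro!: derivative_eq_intros)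
  next
    fix t :: real assume t: "0 \<le> t" "t \<le> 1"
    have "(real M + 1) * a i * \<eta> \<le> (real M + 1) * a i * y t i"
      using etab[OF t] ai by (simp add: mult_left_mono)
    then show "0 \<le> Rd M t - (- a i * y t i - S t) - (real M + 1) * a i * \<eta>"
      using KR[OF t(1), of M] by (simp add: algebra_simps)
  qed auto
  have step2: "R M 1 - y 1 i \<le> R M s - y s i" if s: "s \<ge> 1" for s
  proof (rule mono_deriv[where f = "\<lambda>t. R M t - y t i"
        and f' = "\<lambda>t. Rd M t - (- a i * y t i - S t)"])
    fix t :: real assume t: "t \<ge> 0"
    show "((\<lambda>t. R M t - y t i) has_real_derivative Rd M t - (- a i * y t i - S t)) (at t within {0..})"
      using DR[OF t] DY[OF t] by (auto intro!: derivative_eq_intros)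
  next
    fix t :: real assume t: "1 \<le> t" "t \<le> s"
    have yt: "y t i > 0" using pos t by simp
    have "0 \<le> real M * (a i * y t i)" using ai yt by simp
    moreover have "0 \<le> a i * y t i" using ai yt by simp
    ultimately show "0 \<le> Rd M t - (- a i * y t i - S t)"
      using KR[of t M] t by linarith
  qed (use s in auto)
  define c where "c = \<delta>0 * (a i * \<eta>) / 2"
  have c: "c > 0" using assms(3) aeta by (simp add: c_def)
  have Sc: "S s \<ge> c" if s: "s \<ge> 1" for s
  proof -
    have s0: "s \<ge> 0" using s by simp
    have "R M s \<le> real M * P ((M+1)*i) s"
    proof -
      have le: "\<And>m. m < M \<Longrightarrow> i + m * i \<le> M * i"
        by (metis Suc_leI add.commute mult_Suc mult_le_mono1)
      have "R M s \<le> (\<Sum>m<M. P ((M+1)*i) s)"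
        unfolding R_def P_def
        by (rule sum_mono, rule sum_mono2) (use nn[OF s0] le in auto)
      then show ?thesis by simp
    qed
    moreover have "R M s \<ge> real M * (a i * \<eta>) / 2"
      using step1 step2[OF s] Rnn[of 0] pos[rule_format, OF s0] M(1) aeta by (simp add: algebra_simps)
    ultimately have "real M * P ((M+1)*i) s \<ge> real M * ((a i * \<eta>) / 2)" by simp
    then have "P ((M+1)*i) s \<ge> (a i * \<eta>) / 2" using M(2) by (simp add: mult_le_cancel_left_pos)
    then have "\<delta>0 * P ((M+1)*i) s \<ge> \<delta>0 * ((a i * \<eta>) / 2)" using assms(3) by (simp add: mult_left_mono)
    then show ?thesis using PS[OF s0, of "(M+1)*i"] by (simp add: c_def)
  qed
  define b where "b = 2 + y 1 i / c"
  have "y 1 i / c \<ge> 0" using pos[rule_format, of 1] c by simp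
  then have b1: "b \<ge> 1" by (simp add: b_def)
  have "- y 1 i - c * 1 \<le> - y b i - c * b"
  proof (rule mono_deriv[where f = "\<lambda>t. - y t i - c * t" and f' = "\<lambda>t. a i * y t i + S t - c"])
    fix t :: real assume t: "t \<ge> 0"
    show "((\<lambda>t. - y t i - c * t) has_real_derivative a i * y t i + S t - c) (at t within {0..})"
      using DY[OF t] by (auto intro!: derivative_eq_intros)
  next
    fix t :: real assume t: "1 \<le> t" "t \<le> b"
    then have "0 \<le> a i * y t i" using ai pos[rule_format, of t] by simp
    then show "0 \<le> a i * y t i + S t - c" using Sc[of t] t by linarith
  qed (use b1 in auto)
  then have "y b i \<le> y 1 i + c - c * b" by simp
  also have "c * b = 2 * c + y 1 i" using c by (simp add: b_def algebra_simps)
  finally have "y b i < 0" using c by simp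
  then show False using pos[rule_format, of b] b1 by simp
qed

theorem proposition2p4:
  fixes i :: nat and a :: "nat \<Rightarrow> real" and A \<delta>0 :: real
    and y0 :: "nat \<Rightarrow> real" and y :: "real \<Rightarrow> nat \<Rightarrow> real"
  assumes "i \<ge> 1"
    and "A > 0" and "\<delta>0 > 0"
    and "\<forall>j\<ge>1. \<delta>0 \<le> a j \<and> a j \<le> A * real j"
    and "y0 \<in> X1i_pos i" and "y0 i > 0"
    and "is_solution a i y0 y"
  shows "0 < (SUP t\<in>{t. t > 0 \<and> (\<forall>s\<in>{0..<t}. y s i > 0)}. ereal t)
       \<and> (SUP t\<in>{t. t > 0 \<and> (\<forall>s\<in>{0..<t}. y s i > 0)}. ereal t) < \<infinity>"
proof -
  define T where "T = {t. t > 0 \<and> (\<forall>s\<in>{0..<t}. y s i > 0)}"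
  have y00: "y 0 = y0"
    and D: "\<And>j t. t \<ge> 0 \<Longrightarrow> ((\<lambda>s. y s j) has_real_derivative Fcoag a i (y t) j) (at t within {0..})"
    using assms(7) unfolding is_solution_def by auto
  have "continuous (at 0 within {0..}) (\<lambda>s. y s i)" using D[of 0 i] by (auto intro: DERIV_continuous)
  then obtain d where d: "d > 0" "\<forall>x'\<in>{0..}. dist x' 0 < d \<longrightarrow> dist (y x' i) (y 0 i) < y0 i"
    unfolding continuous_within_eps_delta using assms(6) by blast
  have "d \<in> T"
  proof -
    have "y s i > 0" if "s \<in> {0..<d}" for s
    proof -
      have "dist (y s i) (y 0 i) < y0 i" using d that by (auto simp: dist_real_def)
      then show ?thesis using y00 by (auto simp: dist_real_def)
    qed
    then show ?thesis using d by (auto simp: T_def)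
  qed
  then have "ereal d \<le> (SUP t\<in>T. ereal t)" by (rule SUP_upper)
  moreover have "0 < ereal d" using d by simp
  ultimately have part1: "0 < (SUP t\<in>T. ereal t)" by (rule order.strict_trans2[rotated])
  have "\<exists>s\<ge>0. y s i \<le> 0"
  proof (rule ccontr)
    assume "\<not> (\<exists>s\<ge>0. y s i \<le> 0)"
    then have "\<forall>s\<ge>0. y s i > 0" using not_le by blast
    then show False by (rule never_positive[OF assms(1-5,7)])
  qed
  then obtain s0 where s0: "s0 \<ge> 0" "y s0 i \<le> 0" by blast
  have "(SUP t\<in>T. ereal t) \<le> ereal s0"
  proof (rule SUP_least)
    fix t assume "t \<in> T"
    then have tT: "\<forall>s\<in>{0..<t}. y s i > 0" unfolding T_def by simp
    have "t \<le> s0"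
    proof (rule ccontr)
      assume "\<not> t \<le> s0"
      then have "s0 \<in> {0..<t}" using s0 by simp
      then show False using tT s0 by fastforce
    qed
    then show "ereal t \<le> ereal s0" by simp
  qed
  then have "(SUP t\<in>T. ereal t) < \<infinity>" using order.strict_trans1 by fastforce
  with part1 show ?thesis unfolding T_def by simp
qed

end
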